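(* Let $\mathcal D=\{A_\lambda\}_{\lambda\in\Lambda}$ be a finite family of subsets of some set, with a decomposition $\Lambda=\Lambda_0\sqcup\Lambda_1\sqcup\dots\sqcup\Lambda_n$ (sets $A_\lambda$ with $\lambda\in\Lambda_r$ are said to have type $r$). Assume: (1) for any $A_{\lambda_1},A_{\lambda_2}\in\mathcal D$ of types $r_1,r_2$, $A_{\lambda_1}\cap A_{\lambda_2}$ is a finite union of sets from $\mathcal D$ of types at most $\min\{r_1,r_2\}$; (2) if $\lambda_1\ne\lambda_2$ and $A_{\lambda_1},A_{\lambda_2}$ have the same type $r$, then $A_{\lambda_1}\cap A_{\lambda_2}$ is a finite union of sets from $\mathcal D$ of types strictly less than $r$; (3) every finite union $X$ of elements of $\mathcal D$ has a unique reduced presentation $X=\bigcup_{j=1}^sA_{\lambda_j}$, i.e. one in which no $A_{\lambda_j}$ is contained in another $A_{\lambda_k}$. Let $\mathcal T$ be the family of all finite unions of elements of $\mathcal D$, and let $m:\Lambda\to\mathbb{C}$ be any function. Then there exists a unique function $\mu:\mathcal T\to\mathbb{C}$ with $\mu(A\cup B)=\mu(A)+\mu(B)-\mu(A\cap B)$ for all $A,B\in\mathcal T$ and $\mu(A_\lambda)=m(\lambda)$ for all $\lambda\in\Lambda$. *)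

theory Defs
  imports Complex_Main "HOL-Library.FuncSet"
begin

text \<open>The family D = {A l}, l in Lam. T = all finite unions of members of D
  (the empty union, i.e. the empty set, included).\<close>
definition fin_unions :: "('i \<Rightarrow> 'a set) \<Rightarrow> 'i set \<Rightarrow> 'a set set" where
  "fin_unions A Lam = {\<Union>(A ` S) | S. finite S \<and> S \<subseteq> Lam}"

definition union_of_types :: "('i \<Rightarrow> 'a set) \<Rightarrow> 'i set \<Rightarrow> ('i \<Rightarrow> nat) \<Rightarrow> (nat \<Rightarrow> bool) \<Rightarrow> 'a set \<Rightarrow> bool" where
  "union_of_types A Lam ty P X \<longleftrightarrow>
     (\<exists>S. finite S \<and> S \<subseteq> Lam \<and> (\<forall>l\<in>S. P (ty l)) \<and> X = \<Union>(A ` S))"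

definition reduced_presentation :: "('i \<Rightarrow> 'a set) \<Rightarrow> 'i set \<Rightarrow> 'i set \<Rightarrow> 'a set \<Rightarrow> bool" where
  "reduced_presentation A Lam S X \<longleftrightarrow>
     finite S \<and> S \<subseteq> Lam \<and> X = \<Union>(A ` S) \<and>
     (\<forall>j\<in>S. \<forall>k\<in>S. j \<noteq> k \<longrightarrow> \<not> A j \<subseteq> A k)"

end

theory Submission
  imports Defs
begin

theorem lemma2p2p2:
  fixes A :: "'i \<Rightarrow> 'a set" and Lam :: "'i set" and ty :: "'i \<Rightarrow> nat"
    and n :: nat and m :: "'i \<Rightarrow> complex"
  assumes fin: "finite Lam"
    and types: "\<forall>l\<in>Lam. ty l \<le> n"
    and cond1: "\<forall>l1\<in>Lam. \<forall>l2\<in>Lam.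
        union_of_types A Lam ty (\<lambda>r. r \<le> min (ty l1) (ty l2)) (A l1 \<inter> A l2)"
    and cond2: "\<forall>l1\<in>Lam. \<forall>l2\<in>Lam. l1 \<noteq> l2 \<and> ty l1 = ty l2 \<longrightarrow>
        union_of_types A Lam ty (\<lambda>r. r < ty l1) (A l1 \<inter> A l2)"
    and cond3: "\<forall>X\<in>fin_unions A Lam. \<exists>!S. reduced_presentation A Lam S X"
  shows "\<exists>!\<mu>. \<mu> \<in> fin_unions A Lam \<rightarrow>\<^sub>E (UNIV :: complex set) \<and>
           \<mu> {} = 0 \<and>
           (\<forall>B\<in>fin_unions A Lam. \<forall>C\<in>fin_unions A Lam.
              \<mu> (B \<union> C) = \<mu> B + \<mu> C - \<mu> (B \<inter> C)) \<and>
           (\<forall>l\<in>Lam. \<mu> (A l) = m l)"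
proof -
  define T where "T = fin_unions A Lam"
  have memT: "X \<in> T \<longleftrightarrow> (\<exists>S. finite S \<and> S \<subseteq> Lam \<and> X = \<Union>(A ` S))" for X
    unfolding T_def fin_unions_def by blast
  have c3: "\<exists>!S. reduced_presentation A Lam S X" if "X \<in> T" for X
    using cond3 that T_def by blast
  have AT: "A l \<in> T" if "l \<in> Lam" for l
    unfolding memT using that by (intro exI[of _ "{l}"]) auto
  have emT: "{} \<in> T" using memT[of "{}"] by auto
  have inj: "k = l" if "k\<in>Lam" "l\<in>Lam" "A k = A l" for k l
  proof -
    have r1: "reduced_presentation A Lam {l} (A l)" and r2: "reduced_presentation A Lam {k} (A l)"
      unfolding reduced_presentation_def using that by auto
    have "{k} = {l}" using c3[OF AT[OF that(2)]] r1 r2 by blast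
    thus ?thesis by simp
  qed
  have nonempty: "A l \<noteq> {}" if "l\<in>Lam" for l
  proof
    assume h: "A l = {}"
    have r1: "reduced_presentation A Lam {l} {}" and r2: "reduced_presentation A Lam {} {}"
      unfolding reduced_presentation_def using that h by auto
    have "{l} = {}" using c3[OF emT] r1 r2 by blast
    thus False by simp
  qed
  have irred: "k \<in> S" if k: "k\<in>Lam" and S: "finite S" "S \<subseteq> Lam" and eq: "A k = \<Union>(A`S)" for k S
  proof -
    define S' where "S' = {i\<in>S. \<forall>j\<in>S. A i \<subseteq> A j \<longrightarrow> A i = A j}"
    have cover: "\<Union>(A`S') = \<Union>(A`S)"
    proof
      show "\<Union>(A`S') \<subseteq> \<Union>(A`S)" by (auto simp: S'_def)
      show "\<Union>(A`S) \<subseteq> \<Union>(A`S')"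
      proof
        fix x assume "x \<in> \<Union>(A`S)"
        then obtain i where i: "i\<in>S" "x \<in> A i" by blast
        obtain M where M: "M \<in> A`S" "A i \<subseteq> M" "\<forall>B\<in>A`S. M \<subseteq> B \<longrightarrow> M = B"
          using finite_has_maximal2[of "A`S" "A i"] S i by auto
        then obtain j where j: "j\<in>S" "M = A j" by blast
        hence "j \<in> S'" using M unfolding S'_def by auto
        thus "x \<in> \<Union>(A`S')" using i M j by auto
      qed
    qed
    have "reduced_presentation A Lam S' (A k)"
      unfolding reduced_presentation_def
    proof (intro conjI ballI impI)
      show "finite S'" using S by (auto simp: S'_def)
      show "S' \<subseteq> Lam" using S by (auto simp: S'_def)
      show "A k = \<Union>(A`S')" using cover eq by simp
    next
      fix j k' assume jk: "j \<in> S'" "k' \<in> S'" "j \<noteq> k'"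
      show "\<not> A j \<subseteq> A k'"
      proof
        assume "A j \<subseteq> A k'"
        hence "A j = A k'" using jk unfolding S'_def by auto
        hence "j = k'" using inj jk S unfolding S'_def by auto
        thus False using jk by simp
      qed
    qed
    moreover have "reduced_presentation A Lam {k} (A k)"
      unfolding reduced_presentation_def using k by auto
    ultimately have "S' = {k}" using c3[OF AT[OF k]] by blast
    thus ?thesis unfolding S'_def by auto
  qed
  have ex: "\<exists>S. finite S \<and> S \<subseteq> Lam \<and> A i \<inter> A j = \<Union>(A`S)" if "i\<in>Lam" "j\<in>Lam" for i j
  proof -
    have "union_of_types A Lam ty (\<lambda>r. r \<le> min (ty i) (ty j)) (A i \<inter> A j)" using cond1 that by blast
    then obtain S where "finite S" "S \<subseteq> Lam" "A i \<inter> A j = \<Union>(A`S)" unfolding union_of_types_def by blast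
    thus ?thesis by blast
  qed
  define g where "g i j = (SOME S. finite S \<and> S \<subseteq> Lam \<and> A i \<inter> A j = \<Union>(A`S))" for i j
  have g: "finite (g i j) \<and> g i j \<subseteq> Lam \<and> A i \<inter> A j = \<Union>(A ` g i j)" if "i\<in>Lam" "j\<in>Lam" for i j
    unfolding g_def by (rule someI_ex[OF ex[OF that]])
  have below: "\<exists>j\<in>S. A k \<subseteq> A j" if k: "k\<in>Lam" and S: "finite S" "S\<subseteq>Lam" and sub: "A k \<subseteq> \<Union>(A`S)" for k S
  proof -
    define S'' where "S'' = (\<Union>j\<in>S. g k j)"
    have "\<Union>(A ` S'') = (\<Union>j\<in>S. \<Union>(A ` g k j))" unfolding S''_def by auto
    also have "\<dots> = (\<Union>j\<in>S. A k \<inter> A j)"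
    proof (rule SUP_cong[OF refl])
      fix j assume "j \<in> S"
      hence "j \<in> Lam" using S by blast
      thus "\<Union>(A ` g k j) = A k \<inter> A j" using g[of k j] k by simp
    qed
    also have "\<dots> = A k" using sub by blast
    finally have e: "A k = \<Union>(A ` S'')" by simp
    have gS: "finite (g k j) \<and> g k j \<subseteq> Lam" if "j \<in> S" for j
      using g[of k j] k S that by blast
    have "finite S''" unfolding S''_def using S(1) gS by blast
    moreover have "S'' \<subseteq> Lam" unfolding S''_def using gS by blast
    ultimately have "k \<in> S''" using irred[OF k _ _ e] by blast
    then obtain j where j: "j \<in> S" "k \<in> g k j" unfolding S''_def by blast
    have "A k \<subseteq> \<Union>(A ` g k j)" using j(2) by blast
    also have "\<dots> = A k \<inter> A j" using g[of k j] k S j(1) by blast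
    finally show ?thesis using j by blast
  qed
  have IntT: "B \<inter> C \<in> T" if BT: "B\<in>T" and CT: "C\<in>T" for B C
  proof -
    obtain S1 where S1: "finite S1" "S1 \<subseteq> Lam" "B = \<Union>(A`S1)" using BT unfolding memT by blast
    obtain S2 where S2: "finite S2" "S2 \<subseteq> Lam" "C = \<Union>(A`S2)" using CT unfolding memT by blast
    define S where "S = (\<Union>i\<in>S1. \<Union>j\<in>S2. g i j)"
    have gS: "finite (g i j) \<and> g i j \<subseteq> Lam \<and> A i \<inter> A j = \<Union>(A ` g i j)" if "i \<in> S1" "j \<in> S2" for i j
      using g[of i j] S1(2) S2(2) that by blast
    have "\<Union>(A`S) = (\<Union>i\<in>S1. \<Union>j\<in>S2. \<Union>(A ` g i j))" unfolding S_def by blast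
    also have "\<dots> = (\<Union>i\<in>S1. \<Union>j\<in>S2. A i \<inter> A j)"
    proof (rule SUP_cong[OF refl], rule SUP_cong[OF refl])
      fix i j assume "i \<in> S1" "j \<in> S2"
      thus "\<Union>(A ` g i j) = A i \<inter> A j" using gS[of i j] by simp
    qed
    also have "\<dots> = B \<inter> C" unfolding S1(3) S2(3) by blast
    finally have "B \<inter> C = \<Union>(A`S)" by simp
    moreover have "finite S" unfolding S_def
      using S1(1) S2(1) gS by (intro finite_UN_I) auto
    moreover have "S \<subseteq> Lam" unfolding S_def
      using gS by blast
    ultimately show ?thesis unfolding memT using S1 S2 by blast
  qed
  have UnT: "B \<union> C \<in> T" if BT: "B\<in>T" and CT: "C\<in>T" for B C
  proof -
    obtain S1 where S1: "finite S1" "S1 \<subseteq> Lam" "B = \<Union>(A`S1)" using BT unfolding memT by blast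
    obtain S2 where S2: "finite S2" "S2 \<subseteq> Lam" "C = \<Union>(A`S2)" using CT unfolding memT by blast
    have "B \<union> C = \<Union>(A`(S1 \<union> S2))" using S1 S2 by auto
    thus ?thesis unfolding memT using S1 S2 by (intro exI[of _ "S1 \<union> S2"]) auto
  qed
  have subUn: "A k \<subseteq> B \<union> C \<longleftrightarrow> A k \<subseteq> B \<or> A k \<subseteq> C" if kL: "k\<in>Lam" and BT: "B\<in>T" and CT: "C\<in>T" for k B C
  proof -
    obtain S1 where S1: "finite S1" "S1 \<subseteq> Lam" "B = \<Union>(A`S1)" using BT unfolding memT by blast
    obtain S2 where S2: "finite S2" "S2 \<subseteq> Lam" "C = \<Union>(A`S2)" using CT unfolding memT by blast
    have "B \<union> C = \<Union>(A`(S1 \<union> S2))" using S1 S2 by auto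
    show ?thesis
    proof
      assume "A k \<subseteq> B \<union> C"
      then obtain j where "j \<in> S1 \<union> S2" "A k \<subseteq> A j"
        using below[OF kL, of "S1 \<union> S2"] S1(1,2) S2(1,2) \<open>B \<union> C = _\<close> by auto
      hence "A j \<subseteq> B \<or> A j \<subseteq> C" unfolding S1(3) S2(3) by blast
      thus "A k \<subseteq> B \<or> A k \<subseteq> C" using \<open>A k \<subseteq> A j\<close> by blast
    qed auto
  qed
  define cnt where "cnt X = {k\<in>Lam. A k \<subseteq> X}" for X
  have fincnt: "finite (cnt X)" for X using fin unfolding cnt_def by auto
  define N where "N l = card (cnt (A l))" for l
  define f where "f = wfrec (measure N) (\<lambda>F l. m l - (\<Sum>k\<in>{k\<in>Lam. A k \<subset> A l}. F k))"
  have f_eq: "f l = m l - (\<Sum>k\<in>{k\<in>Lam. A k \<subset> A l}. f k)" if l: "l\<in>Lam" for l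
  proof -
    have "f l = m l - (\<Sum>k\<in>{k\<in>Lam. A k \<subset> A l}. cut f (measure N) l k)"
      using def_wfrec[OF f_def[THEN eq_reflection] wf_measure, of l] by simp
    also have "(\<Sum>k\<in>{k\<in>Lam. A k \<subset> A l}. cut f (measure N) l k) = (\<Sum>k\<in>{k\<in>Lam. A k \<subset> A l}. f k)"
    proof (rule sum.cong)
      fix k assume "k \<in> {k\<in>Lam. A k \<subset> A l}"
      hence k: "k \<in> Lam" "A k \<subset> A l" by auto
      have "cnt (A k) \<subset> cnt (A l)" using k l unfolding cnt_def by auto
      hence "N k < N l" unfolding N_def using fincnt psubset_card_mono by blast
      thus "cut f (measure N) l k = f k" by (simp add: cut_apply)
    qed simp
    finally show ?thesis .
  qed
  define mu where "mu = restrict (\<lambda>X. \<Sum>k\<in>cnt X. f k) T"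
  have P_mu: "mu \<in> T \<rightarrow>\<^sub>E (UNIV :: complex set) \<and> mu {} = 0 \<and>
           (\<forall>B\<in>T. \<forall>C\<in>T. mu (B \<union> C) = mu B + mu C - mu (B \<inter> C)) \<and>
           (\<forall>l\<in>Lam. mu (A l) = m l)"
  proof (intro conjI ballI)
    show "mu \<in> T \<rightarrow>\<^sub>E UNIV" unfolding mu_def by simp
    have "cnt {} = {}" unfolding cnt_def using nonempty by auto
    thus "mu {} = 0" unfolding mu_def using emT by simp
  next
    fix B C assume B: "B \<in> T" and C: "C \<in> T"
    have "cnt (B \<union> C) = cnt B \<union> cnt C" unfolding cnt_def using subUn B C by auto
    moreover have "cnt (B \<inter> C) = cnt B \<inter> cnt C" unfolding cnt_def by auto
    ultimately have "(\<Sum>k\<in>cnt (B \<union> C). f k) + (\<Sum>k\<in>cnt (B \<inter> C). f k) = (\<Sum>k\<in>cnt B. f k) + (\<Sum>k\<in>cnt C. f k)"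
      using sum.union_inter[OF fincnt fincnt] by simp
    thus "mu (B \<union> C) = mu B + mu C - mu (B \<inter> C)"
      unfolding mu_def using B C UnT IntT by (simp add: algebra_simps)
  next
    fix l assume l: "l \<in> Lam"
    have "cnt (A l) = insert l {k\<in>Lam. A k \<subset> A l}" unfolding cnt_def using l inj by auto
    moreover have "finite {k\<in>Lam. A k \<subset> A l}" using fin by auto
    ultimately have "(\<Sum>k\<in>cnt (A l). f k) = f l + (\<Sum>k\<in>{k\<in>Lam. A k \<subset> A l}. f k)" by simp
    thus "mu (A l) = m l" unfolding mu_def using AT[OF l] f_eq[OF l] by simp
  qed
  have uniq: "\<mu> = \<nu>" if
    P1: "\<mu> \<in> T \<rightarrow>\<^sub>E (UNIV :: complex set) \<and> \<mu> {} = 0 \<and>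
           (\<forall>B\<in>T. \<forall>C\<in>T. \<mu> (B \<union> C) = \<mu> B + \<mu> C - \<mu> (B \<inter> C)) \<and>
           (\<forall>l\<in>Lam. \<mu> (A l) = m l)" and
    P2: "\<nu> \<in> T \<rightarrow>\<^sub>E (UNIV :: complex set) \<and> \<nu> {} = 0 \<and>
           (\<forall>B\<in>T. \<forall>C\<in>T. \<nu> (B \<union> C) = \<nu> B + \<nu> C - \<nu> (B \<inter> C)) \<and>
           (\<forall>l\<in>Lam. \<nu> (A l) = m l)" for \<mu> \<nu>
  proof -
    have main: "\<forall>X. X\<in>T \<longrightarrow> card (cnt X) = c \<longrightarrow> \<mu> X = \<nu> X" for c
    proof (induction c rule: less_induct)
      case (less c)
      show ?case
      proof (intro allI impI)
        fix X assume X: "X\<in>T" "card (cnt X) = c"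
        obtain S where S: "reduced_presentation A Lam S X" using c3[OF X(1)] by blast
        hence Sf: "finite S" "S \<subseteq> Lam" "X = \<Union>(A`S)"
          and Sr: "\<forall>j\<in>S. \<forall>k\<in>S. j \<noteq> k \<longrightarrow> \<not> A j \<subseteq> A k"
          unfolding reduced_presentation_def by auto
        show "\<mu> X = \<nu> X"
        proof (cases "S = {}")
          case True
          then show ?thesis using Sf P1 P2 by simp
        next
          case False
          then obtain l where l: "l \<in> S" by blast
          have lL: "l \<in> Lam" using l Sf by auto
          define Y where "Y = \<Union>(A ` (S - {l}))"
          have XY: "X = A l \<union> Y" using Sf l unfolding Y_def by auto
          have YT: "Y \<in> T" unfolding Y_def using memT Sf
            by (metis Diff_subset finite_Diff subset_trans)
          have IT: "A l \<inter> Y \<in> T" using IntT AT[OF lL] YT by blast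
          have nY: "\<not> A l \<subseteq> Y"
          proof
            assume "A l \<subseteq> Y"
            then obtain j where "j \<in> S - {l}" "A l \<subseteq> A j"
              using below[OF lL, of "S - {l}"] Sf unfolding Y_def by auto
            thus False using Sr l by auto
          qed
          have c1: "cnt Y \<subset> cnt X" using XY nY lL unfolding cnt_def by auto
          have c2: "cnt (A l \<inter> Y) \<subset> cnt X" using XY nY lL unfolding cnt_def by auto
          have "card (cnt Y) < c" using c1 X(2) fincnt psubset_card_mono by blast
          hence eY: "\<mu> Y = \<nu> Y" using less YT by blast
          have "card (cnt (A l \<inter> Y)) < c" using c2 X(2) fincnt psubset_card_mono by blast
          hence eI: "\<mu> (A l \<inter> Y) = \<nu> (A l \<inter> Y)" using less IT by blast
          have "\<mu> X = \<mu> (A l) + \<mu> Y - \<mu> (A l \<inter> Y)" using P1 XY AT[OF lL] YT by simp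
          also have "\<dots> = \<nu> (A l) + \<nu> Y - \<nu> (A l \<inter> Y)" using eY eI P1 P2 lL by simp
          also have "\<dots> = \<nu> X" using P2 XY AT[OF lL] YT by simp
          finally show ?thesis .
        qed
      qed
    qed
    show ?thesis
      using P1 P2 by (intro PiE_ext[of \<mu> T "\<lambda>_. UNIV" \<nu>]) (use main in auto)
  qed
  show ?thesis unfolding T_def[symmetric]
    using P_mu uniq by (intro ex1I[of _ mu]) blast+
qed

end
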